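(* Let $\lambda>1$, $E\in\mathbb{R}$, $v:\mathbb{T}\to\mathbb{R}$, $\omega\in\mathbb{R}$ and $\theta_0\in\mathbb{T}$. Let $s_0<r_0$ be such that the fibre orbits $r_{k+1}=\lambda^2v(\theta_k)-E-1/r_k$, $s_{k+1}=\lambda^2v(\theta_k)-E-1/s_k$ (with $\theta_k=\theta_0+k\omega$) satisfy $r_k,s_k\in B$ for all $k\ge0$. If $r_0-s_0\ge\lambda^{-7}$, then for every integer $t>0$, $$\frac{|\{0\le j<t:r_j\in B^s\}|}{t}\le\frac23+\frac{3}{2t}.$$
   Context: $B=[\lambda^{-2},\lambda^2]$, $B^s=[\lambda^{-2},\lambda^{-1}]$. *)

theory Defs
  imports Complex_Main
begin

definition Bset :: "real \<Rightarrow> real set" where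
  "Bset lam = {lam powi (-2) .. lam\<^sup>2}"

definition Bs :: "real \<Rightarrow> real set" where
  "Bs lam = {lam powi (-2) .. lam powi (-1)}"

end

theory Submission
  imports Defs
begin

lemma card_Suc_split:
  "card {j. j < Suc n \<and> Q j} = card {j. j < n \<and> Q j} + (if Q n then 1 else 0)"
proof -
  have e: "{j. j < Suc n \<and> Q j} = (if Q n then insert n {j. j < n \<and> Q j} else {j. j < n \<and> Q j})"
    by (auto simp: less_Suc_eq)
  show ?thesis by (simp add: e)
qed

theorem lemmaB5:
  fixes lam E \<omega> \<theta>0 :: real and v :: "real \<Rightarrow> real" and r s :: "nat \<Rightarrow> real"
  assumes "lam > 1"
    and "\<And>x. v (x + 1) = v x"
    and "s 0 < r 0"
    and "\<And>k. r (Suc k) = lam\<^sup>2 * v (\<theta>0 + real k * \<omega>) - E - 1 / r k"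
    and "\<And>k. s (Suc k) = lam\<^sup>2 * v (\<theta>0 + real k * \<omega>) - E - 1 / s k"
    and "\<And>k. r k \<in> Bset lam"
    and "\<And>k. s k \<in> Bset lam"
    and "r 0 - s 0 \<ge> lam powi (-7)"
    and "t > (0::nat)"
  shows "real (card {j. j < t \<and> r j \<in> Bs lam}) / real t \<le> 2/3 + 3 / (2 * real t)"
proof -
  note lam = assms(1)
  have lp: "lam > 0" using lam by simp
  have m2: "lam powi (-2) = inverse (lam^2)" by (simp add: power_int_minus)
  have m1: "lam powi (-1) = inverse lam" by (simp add: power_int_minus)
  have m7: "lam powi (-7) = inverse (lam^7)" by (simp add: power_int_minus)
  have rb: "inverse (lam^2) \<le> r k \<and> r k \<le> lam^2" for k using assms(6)[of k] by (simp add: Bset_def m2)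
  have sb: "inverse (lam^2) \<le> s k \<and> s k \<le> lam^2" for k using assms(7)[of k] by (simp add: Bset_def m2)
  have rpos: "r k > 0" for k using rb[of k] lp by (meson less_le_trans positive_imp_inverse_positive zero_less_power)
  have spos: "s k > 0" for k using sb[of k] lp by (meson less_le_trans positive_imp_inverse_positive zero_less_power)
  define P where "P n = (\<Prod>k<n. r k * s k)" for n
  define Q where "Q j = (r j \<in> Bs lam)" for j
  define a where "a n = card {j. j < n \<and> Q j}" for n
  define b where "b n = card {j. j < n \<and> \<not> Q j}" for n
  have key: "s n < r n \<and> r 0 - s 0 = (r n - s n) * P n" for n
  proof (induction n)
    case 0 then show ?case using assms(3) by (simp add: P_def)
  next
    case (Suc n)
    have d: "r (Suc n) - s (Suc n) = (r n - s n) / (r n * s n)"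
    proof -
      have "r (Suc n) - s (Suc n) = 1 / s n - 1 / r n" unfolding assms(4,5)[of n] by simp
      also have "\<dots> = (r n - s n) / (r n * s n)" using rpos[of n] spos[of n] by (simp add: field_simps)
      finally show ?thesis .
    qed
    have pos: "r (Suc n) - s (Suc n) > 0" using d Suc rpos[of n] spos[of n] by simp
    have "(r (Suc n) - s (Suc n)) * P (Suc n) = (r n - s n) * P n"
      using rpos[of n] spos[of n] unfolding d by (simp add: P_def)
    then show ?case using pos Suc by simp
  qed
  have Ppos: "P n \<ge> 0" for n unfolding P_def using rpos spos
    by (simp add: less_imp_le prod_nonneg)
  have step: "r n * s n * lam^(2 * (if Q n then 1 else 0)) \<le> lam^(4 * (if \<not> Q n then 1 else 0))" for n
  proof (cases "Q n")
    case True
    then have "r n \<le> inverse lam" by (simp add: Q_def Bs_def m1)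
    moreover have "s n < r n" using key[of n] by simp
    ultimately have "r n * s n \<le> inverse lam * inverse lam"
      using rpos[of n] spos[of n] lp by (intro mult_mono) auto
    then have "r n * s n * lam^2 \<le> inverse lam * inverse lam * lam^2" using lp
      by (intro mult_right_mono) auto
    then show ?thesis using True lp by (simp add: power2_eq_square field_simps)
  next
    case False
    have "s n < r n" using key[of n] by simp
    then have "r n * s n \<le> lam^2 * lam^2"
      using rb[of n] rpos[of n] spos[of n] by (intro mult_mono) auto
    then show ?thesis using False by (simp add: power_add[symmetric])
  qed
  have ind: "P n * lam^(2 * a n) \<le> lam^(4 * b n)" for n
  proof (induction n)
    case 0 then show ?case by (simp add: P_def a_def b_def)
  next
    case (Suc n)
    have "P (Suc n) * lam^(2 * a (Suc n)) = (P n * lam^(2 * a n)) * (r n * s n * lam^(2 * (if Q n then 1 else 0)))"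
      unfolding a_def card_Suc_split by (simp add: P_def power_add algebra_simps)
    also have "\<dots> \<le> lam^(4 * b n) * lam^(4 * (if \<not> Q n then 1 else 0))"
      using Suc step[of n] Ppos[of n] rpos[of n] spos[of n] lp
      by (intro mult_mono) auto
    also have "\<dots> = lam^(4 * b (Suc n))"
      unfolding b_def card_Suc_split[of n "\<lambda>j. \<not> Q j"] by (simp add: power_add algebra_simps)
    finally show ?case .
  qed
  have ab: "a n + b n = n" for n
  proof (induction n)
    case 0 then show ?case by (simp add: a_def b_def)
  next
    case (Suc n) then show ?case
      unfolding a_def b_def card_Suc_split[of n Q] card_Suc_split[of n "\<lambda>j. \<not> Q j"] by simp
  qed
  have dt: "r t - s t \<le> lam^2" using rb[of t] spos[of t] by simp
  have "inverse (lam^7) \<le> (r t - s t) * P t" using assms(8) key[of t] m7 by simp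
  also have "\<dots> \<le> lam^2 * P t" using dt Ppos[of t] by (intro mult_right_mono) auto
  finally have "inverse (lam^7) * lam^(2 * a t) \<le> lam^2 * P t * lam^(2 * a t)"
    using lp by (intro mult_right_mono) auto
  also have "\<dots> \<le> lam^2 * lam^(4 * b t)" using ind[of t] lp
    by (simp add: mult.assoc mult_left_mono)
  finally have "lam^(2 * a t) \<le> lam^7 * (lam^2 * lam^(4 * b t))"
    using lp by (simp add: field_simps)
  also have "\<dots> = lam^(9 + 4 * b t)" by (simp add: power_add)
  finally have "2 * a t \<le> 9 + 4 * b t"
    using lam power_le_imp_le_exp by blast
  then have "6 * a t \<le> 9 + 4 * t" using ab[of t] by simp
  then have "6 * real (a t) \<le> 9 + 4 * real t" by linarith
  then show ?thesis using assms(9) unfolding a_def Q_def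
    by (simp add: field_simps)
qed

end
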